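(* Let $A$ be a left skew brace and $I$ an ideal of $A$. Then there is a largest ideal of $A$ that centralizes $I$ (the centralizer of $I$); i.e. the set of ideals $J$ of $A$ with $[I,J]=0$ has a greatest element with respect to inclusion.
   Context: A (left) skew brace is a triple $(A,*,\circ)$ with $(A,* )$ and $(A,\circ)$ groups with common identity $1$ such that $a\circ(b*c)=(a\circ b)*a^{-*}*(a\circ c)$ for all $a,b,c\in A$ ($a^{-*}$ the $*$-inverse). Morphisms are maps that are homomorphisms for both operations; products are componentwise. For $a,u\in A$, $\lambda_a(u)=a^{-*}*(a\circ u)$. An ideal of $A$ is a subset $I$ that is a normal subgroup of $(A,\circ)$, satisfies $I*a=a*I$ for all $a\in A$, and $\lambda_a(I)\subseteq I$ for all $a\in A$. An ideal $J$ centralizes $I$, written $[I,J]=0$, if there is a skew brace morphism $\varphi\colon I\times J\to A$ with $\varphi(i,1)=i$ and $\varphi(1,j)=j$ for all $i\in I$, $j\in J$. *)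

theory Defs
  imports "HOL-Algebra.Group" "HOL-Algebra.Coset"
begin

text \<open>A skew brace is given by a carrier set A, the operation add (written * in the paper),
the operation mul (written \<circ> in the paper) and the common identity e.\<close>

definition grp :: "'a set \<Rightarrow> ('a \<Rightarrow> 'a \<Rightarrow> 'a) \<Rightarrow> 'a \<Rightarrow> 'a monoid" where
  "grp A f e = \<lparr>carrier = A, mult = f, one = e\<rparr>"

definition add_inv :: "'a set \<Rightarrow> ('a \<Rightarrow> 'a \<Rightarrow> 'a) \<Rightarrow> 'a \<Rightarrow> 'a \<Rightarrow> 'a" where
  "add_inv A add e a = inv\<^bsub>grp A add e\<^esub> a"

definition skew_brace :: "'a set \<Rightarrow> ('a \<Rightarrow> 'a \<Rightarrow> 'a) \<Rightarrow> ('a \<Rightarrow> 'a \<Rightarrow> 'a) \<Rightarrow> 'a \<Rightarrow> bool" where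
  "skew_brace A add mul e \<longleftrightarrow>
     group (grp A add e) \<and> group (grp A mul e) \<and>
     (\<forall>a\<in>A. \<forall>b\<in>A. \<forall>c\<in>A.
        mul a (add b c) = add (add (mul a b) (add_inv A add e a)) (mul a c))"

definition lam :: "'a set \<Rightarrow> ('a \<Rightarrow> 'a \<Rightarrow> 'a) \<Rightarrow> ('a \<Rightarrow> 'a \<Rightarrow> 'a) \<Rightarrow> 'a \<Rightarrow> 'a \<Rightarrow> 'a \<Rightarrow> 'a" where
  "lam A add mul e a u = add (add_inv A add e a) (mul a u)"

definition sb_ideal :: "'a set \<Rightarrow> ('a \<Rightarrow> 'a \<Rightarrow> 'a) \<Rightarrow> ('a \<Rightarrow> 'a \<Rightarrow> 'a) \<Rightarrow> 'a \<Rightarrow> 'a set \<Rightarrow> bool" where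
  "sb_ideal A add mul e I \<longleftrightarrow>
     normal I (grp A mul e) \<and>
     (\<forall>a\<in>A. (\<lambda>i. add i a) ` I = (\<lambda>i. add a i) ` I) \<and>
     (\<forall>a\<in>A. lam A add mul e a ` I \<subseteq> I)"

text \<open>[I,J]=0: there is a skew brace morphism phi from I \<times> J (componentwise operations)
to A with phi(i,e)=i and phi(e,j)=j.\<close>

definition centralizes :: "'a set \<Rightarrow> ('a \<Rightarrow> 'a \<Rightarrow> 'a) \<Rightarrow> ('a \<Rightarrow> 'a \<Rightarrow> 'a) \<Rightarrow> 'a \<Rightarrow> 'a set \<Rightarrow> 'a set \<Rightarrow> bool" where
  "centralizes A add mul e I J \<longleftrightarrow>
     (\<exists>\<phi> :: 'a \<times> 'a \<Rightarrow> 'a.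
        (\<forall>x\<in>I \<times> J. \<phi> x \<in> A) \<and>
        (\<forall>i\<in>I. \<forall>j\<in>J. \<forall>i'\<in>I. \<forall>j'\<in>J.
            \<phi> (add i i', add j j') = add (\<phi> (i, j)) (\<phi> (i', j')) \<and>
            \<phi> (mul i i', mul j j') = mul (\<phi> (i, j)) (\<phi> (i', j'))) \<and>
        (\<forall>i\<in>I. \<phi> (i, e) = i) \<and> (\<forall>j\<in>J. \<phi> (e, j) = j))"

end

theory Submission imports Defs begin

locale sb =
  fixes A add mul e
  assumes sbr: "skew_brace A add mul e"
begin

sublocale G: group "grp A add e" using sbr unfolding skew_brace_def by blast
sublocale M: group "grp A mul e" using sbr unfolding skew_brace_def by blast

abbreviation ai where "ai a \<equiv> add_inv A add e a"
abbreviation mi where "mi a \<equiv> inv\<^bsub>grp A mul e\<^esub> a"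
abbreviation la where "la a u \<equiv> lam A add mul e a u"

lemma gs[simp]: "carrier (grp A f e) = A" "mult (grp A f e) = f" "one (grp A f e) = e"
  by (simp_all add: grp_def)

lemma e_in[simp]: "e \<in> A" using G.one_closed by simp
lemma add_cl[simp]: "a \<in> A \<Longrightarrow> b \<in> A \<Longrightarrow> add a b \<in> A" using G.m_closed[of a b] by simp
lemma mul_cl[simp]: "a \<in> A \<Longrightarrow> b \<in> A \<Longrightarrow> mul a b \<in> A" using M.m_closed[of a b] by simp
lemma ai_cl[simp]: "a \<in> A \<Longrightarrow> ai a \<in> A" using G.inv_closed[of a] by (simp add: add_inv_def)
lemma mi_cl[simp]: "a \<in> A \<Longrightarrow> mi a \<in> A" using M.inv_closed[of a] by simp
lemma add_assoc: "a \<in> A \<Longrightarrow> b \<in> A \<Longrightarrow> c \<in> A \<Longrightarrow> add (add a b) c = add a (add b c)"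
  using G.m_assoc[of a b c] by simp
lemma mul_assoc: "a \<in> A \<Longrightarrow> b \<in> A \<Longrightarrow> c \<in> A \<Longrightarrow> mul (mul a b) c = mul a (mul b c)"
  using M.m_assoc[of a b c] by simp
lemma add_e[simp]: "a \<in> A \<Longrightarrow> add e a = a" "a \<in> A \<Longrightarrow> add a e = a"
  using G.l_one[of a] G.r_one[of a] by simp_all
lemma mul_e[simp]: "a \<in> A \<Longrightarrow> mul e a = a" "a \<in> A \<Longrightarrow> mul a e = a"
  using M.l_one[of a] M.r_one[of a] by simp_all
lemma ai_inv[simp]: "a \<in> A \<Longrightarrow> add (ai a) a = e" "a \<in> A \<Longrightarrow> add a (ai a) = e"
  using G.l_inv[of a] G.r_inv[of a] by (simp_all add: add_inv_def)
lemma mi_inv[simp]: "a \<in> A \<Longrightarrow> mul (mi a) a = e" "a \<in> A \<Longrightarrow> mul a (mi a) = e"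
  using M.l_inv[of a] M.r_inv[of a] by simp_all
lemma ai_e[simp]: "ai e = e" using G.inv_one by (simp add: add_inv_def)
lemma mi_e[simp]: "mi e = e" using M.inv_one by simp
lemma ai_ai[simp]: "a \<in> A \<Longrightarrow> ai (ai a) = a" using G.inv_inv[of a] by (simp add: add_inv_def)
lemma mi_mi[simp]: "a \<in> A \<Longrightarrow> mi (mi a) = a" using M.inv_inv[of a] by simp

lemma add_canc: "a \<in> A \<Longrightarrow> b \<in> A \<Longrightarrow> add (ai a) (add a b) = b" "a \<in> A \<Longrightarrow> b \<in> A \<Longrightarrow> add a (add (ai a) b) = b"
  by (simp_all flip: add_assoc)
lemma mul_canc: "a \<in> A \<Longrightarrow> b \<in> A \<Longrightarrow> mul (mi a) (mul a b) = b" "a \<in> A \<Longrightarrow> b \<in> A \<Longrightarrow> mul a (mul (mi a) b) = b"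
  by (simp_all flip: mul_assoc)

lemma dist: "a \<in> A \<Longrightarrow> b \<in> A \<Longrightarrow> c \<in> A \<Longrightarrow> mul a (add b c) = add (add (mul a b) (ai a)) (mul a c)"
  using sbr unfolding skew_brace_def by blast

lemma la_cl[simp]: "a \<in> A \<Longrightarrow> u \<in> A \<Longrightarrow> la a u \<in> A" by (simp add: lam_def)
lemma mul_la: "a \<in> A \<Longrightarrow> u \<in> A \<Longrightarrow> mul a u = add a (la a u)"
  by (simp add: lam_def add_canc)
lemma la_add: "a \<in> A \<Longrightarrow> b \<in> A \<Longrightarrow> c \<in> A \<Longrightarrow> la a (add b c) = add (la a b) (la a c)"
  by (simp add: lam_def dist add_assoc)
lemma la_e[simp]: "u \<in> A \<Longrightarrow> la e u = u" by (simp add: lam_def)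
lemma la_ee[simp]: "a \<in> A \<Longrightarrow> la a e = e" by (simp add: lam_def)

lemma la_mul: assumes "a \<in> A" "b \<in> A" "u \<in> A" shows "la a (la b u) = la (mul a b) u"
proof -
  have "add (add (mul a b) (ai a)) (mul a (ai b)) = a" using dist[of a b "ai b"] assms by simp
  hence h: "add (ai a) (mul a (ai b)) = add (ai (mul a b)) a" using assms
    by (metis G.inv_solve_left add_assoc add_cl add_inv_def ai_cl gs(1,2) mul_cl)
  have "la a (la b u) = add (la a (ai b)) (la a (mul b u))" using assms la_add[of a "ai b" "mul b u"] by (simp add: lam_def)
  also have "\<dots> = add (add (ai (mul a b)) a) (add (ai a) (mul a (mul b u)))"
    using assms h by (simp add: lam_def)
  also have "\<dots> = la (mul a b) u" using assms by (simp add: lam_def add_assoc add_canc mul_assoc)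
  finally show ?thesis .
qed

lemma la_la_inv[simp]: "a \<in> A \<Longrightarrow> u \<in> A \<Longrightarrow> la a (la (mi a) u) = u"
  by (simp add: la_mul)
lemma la_inv_la[simp]: "a \<in> A \<Longrightarrow> u \<in> A \<Longrightarrow> la (mi a) (la a u) = u"
  by (simp add: la_mul)
lemma add_as_mul: "a \<in> A \<Longrightarrow> u \<in> A \<Longrightarrow> add a u = mul a (la (mi a) u)"
  by (simp add: mul_la)
lemma ai_as_la: "a \<in> A \<Longrightarrow> ai a = la a (mi a)" by (simp add: lam_def)

abbreviation ideal where "ideal J \<equiv> sb_ideal A add mul e J"

lemma mi_mul: "a \<in> A \<Longrightarrow> b \<in> A \<Longrightarrow> mi (mul a b) = mul (mi b) (mi a)"
  using M.inv_mult_group[of a b] by simp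

lemma normal_iff: "normal J (grp A mul e) \<longleftrightarrow> J \<subseteq> A \<and> J \<noteq> {} \<and> (\<forall>x\<in>J. mi x \<in> J) \<and>
   (\<forall>x\<in>J. \<forall>y\<in>J. mul x y \<in> J) \<and> (\<forall>a\<in>A. \<forall>x\<in>J. mul (mul a x) (mi a) \<in> J)"
proof
  assume "normal J (grp A mul e)"
  then have s: "subgroup J (grp A mul e)" and c: "\<forall>a\<in>A. \<forall>x\<in>J. mul (mul a x) (mi a) \<in> J"
    using M.normal_inv_iff by auto
  show "J \<subseteq> A \<and> J \<noteq> {} \<and> (\<forall>x\<in>J. mi x \<in> J) \<and>
   (\<forall>x\<in>J. \<forall>y\<in>J. mul x y \<in> J) \<and> (\<forall>a\<in>A. \<forall>x\<in>J. mul (mul a x) (mi a) \<in> J)"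
    using subgroup.subset[OF s] subgroup.one_closed[OF s] subgroup.m_inv_closed[OF s]
      subgroup.m_closed[OF s] c by auto
next
  assume h: "J \<subseteq> A \<and> J \<noteq> {} \<and> (\<forall>x\<in>J. mi x \<in> J) \<and>
   (\<forall>x\<in>J. \<forall>y\<in>J. mul x y \<in> J) \<and> (\<forall>a\<in>A. \<forall>x\<in>J. mul (mul a x) (mi a) \<in> J)"
  have "subgroup J (grp A mul e)" by (rule M.subgroupI) (use h in auto)
  then show "normal J (grp A mul e)" using M.normal_inv_iff h by auto
qed

context
  fixes J assumes J: "ideal J"
begin
lemma id_nrm: "J \<subseteq> A" "J \<noteq> {}" "x \<in> J \<Longrightarrow> mi x \<in> J" "x \<in> J \<Longrightarrow> y \<in> J \<Longrightarrow> mul x y \<in> J"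
  "a \<in> A \<Longrightarrow> x \<in> J \<Longrightarrow> mul (mul a x) (mi a) \<in> J"
  using J unfolding sb_ideal_def normal_iff by blast+
lemma id_sub: "x \<in> J \<Longrightarrow> x \<in> A" using id_nrm(1) by blast
lemma id_e: "e \<in> J" using id_nrm(2,3,4) id_sub by (metis ex_in_conv mi_inv(2))
lemma id_la: "a \<in> A \<Longrightarrow> x \<in> J \<Longrightarrow> la a x \<in> J" using J unfolding sb_ideal_def by blast
lemma id_add: "x \<in> J \<Longrightarrow> y \<in> J \<Longrightarrow> add x y \<in> J"
  by (simp add: add_as_mul id_sub id_la id_nrm(4))
lemma id_ai: "x \<in> J \<Longrightarrow> ai x \<in> J"
  by (simp add: ai_as_la id_sub id_la id_nrm(3))
lemma id_cos1: "x \<in> J \<Longrightarrow> a \<in> A \<Longrightarrow> \<exists>x'\<in>J. add x a = add a x'"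
proof -
  assume "x \<in> J" "a \<in> A"
  then have "add x a \<in> (\<lambda>i. add a i) ` J" using J unfolding sb_ideal_def by blast
  then show ?thesis by auto
qed
lemma id_cos2: "x \<in> J \<Longrightarrow> a \<in> A \<Longrightarrow> \<exists>x'\<in>J. add a x = add x' a"
proof -
  assume "x \<in> J" "a \<in> A"
  then have "add a x \<in> (\<lambda>i. add i a) ` J" using J unfolding sb_ideal_def by blast
  then show ?thesis by auto
qed
end

definition cz where "cz I J \<longleftrightarrow> (\<forall>i\<in>I. \<forall>j\<in>J. add i j = add j i \<and> mul i j = mul j i \<and> add i j = mul i j)"

lemma triv_ideal: "ideal {e}"
  unfolding sb_ideal_def normal_iff by auto

lemma la_fix: "i \<in> A \<Longrightarrow> x \<in> A \<Longrightarrow> add i x = mul i x \<Longrightarrow> la i x = x"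
  by (metis add_canc(1) la_cl mul_la)

definition ssum where "ssum J1 J2 = {mul x y | x y. x \<in> J1 \<and> y \<in> J2}"

context
  fixes J1 J2 assumes J1: "ideal J1" and J2: "ideal J2"
begin

lemma ssum_add: "ssum J1 J2 = {add x y | x y. x \<in> J1 \<and> y \<in> J2}"
proof (rule Set.set_eqI, rule iffI)
  fix z assume "z \<in> ssum J1 J2"
  then obtain x y where "x \<in> J1" "y \<in> J2" "z = mul x y" unfolding ssum_def by blast
  then show "z \<in> {add x y | x y. x \<in> J1 \<and> y \<in> J2}"
    using mul_la id_la[OF J2] id_sub[OF J1] id_sub[OF J2] by blast
next
  fix z assume "z \<in> {add x y | x y. x \<in> J1 \<and> y \<in> J2}"
  then obtain x y where xy: "x \<in> J1" "y \<in> J2" "z = add x y" by blast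
  then have "z = mul x (la (mi x) y)" using add_as_mul id_sub[OF J1] id_sub[OF J2] by simp
  moreover have "la (mi x) y \<in> J2" using id_la[OF J2] id_sub[OF J1] xy by simp
  ultimately show "z \<in> ssum J1 J2" unfolding ssum_def using xy(1) by blast
qed

lemma ssum_ideal: "ideal (ssum J1 J2)"
  unfolding sb_ideal_def
proof (intro conjI ballI)
  note s1 = id_sub[OF J1] and s2 = id_sub[OF J2]
  show "normal (ssum J1 J2) (grp A mul e)" unfolding normal_iff
  proof (intro conjI ballI)
    show "ssum J1 J2 \<subseteq> A" unfolding ssum_def using s1 s2 by auto
    show "ssum J1 J2 \<noteq> {}" unfolding ssum_def using id_e[OF J1] id_e[OF J2] by auto
  next
    fix z assume "z \<in> ssum J1 J2"
    then obtain x y where xy: "x \<in> J1" "y \<in> J2" "z = mul x y" unfolding ssum_def by blast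
    have "mi z = mul (mi x) (mul (mul x (mi y)) (mi x))"
      using xy s1 s2 by (simp add: mi_mul mul_assoc mul_canc)
    moreover have "mi x \<in> J1" "mul (mul x (mi y)) (mi x) \<in> J2"
      using xy id_nrm[OF J1] id_nrm[OF J2] s1 by auto
    ultimately show "mi z \<in> ssum J1 J2" unfolding ssum_def by blast
  next
    fix z w assume "z \<in> ssum J1 J2" "w \<in> ssum J1 J2"
    then obtain x y x' y' where xy: "x \<in> J1" "y \<in> J2" "z = mul x y" "x' \<in> J1" "y' \<in> J2" "w = mul x' y'"
      unfolding ssum_def by blast
    have "mul z w = mul (mul x x') (mul (mul (mul (mi x') y) (mi (mi x'))) y')"
      using xy s1 s2 by (simp add: mul_assoc mul_canc)
    moreover have "mul x x' \<in> J1" using xy id_nrm[OF J1] by auto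
    moreover have "mul (mul (mul (mi x') y) (mi (mi x'))) y' \<in> J2"
      using xy id_nrm(4,5)[OF J2] s1 mi_cl by metis
    ultimately show "mul z w \<in> ssum J1 J2" unfolding ssum_def by blast
  next
    fix a z assume a: "a \<in> A" and "z \<in> ssum J1 J2"
    then obtain x y where xy: "x \<in> J1" "y \<in> J2" "z = mul x y" unfolding ssum_def by blast
    have "mul (mul a z) (mi a) = mul (mul (mul a x) (mi a)) (mul (mul a y) (mi a))"
      using xy s1 s2 a by (simp add: mul_assoc mul_canc)
    moreover have "mul (mul a x) (mi a) \<in> J1" "mul (mul a y) (mi a) \<in> J2"
      using xy id_nrm[OF J1] id_nrm[OF J2] a by auto
    ultimately show "mul (mul a z) (mi a) \<in> ssum J1 J2" unfolding ssum_def by blast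
  qed
next
  note s1 = id_sub[OF J1] and s2 = id_sub[OF J2]
  fix a assume a: "a \<in> A"
  show "(\<lambda>i. add i a) ` ssum J1 J2 = (\<lambda>i. add a i) ` ssum J1 J2"
  proof (intro Set.set_eqI iffI)
    fix z assume "z \<in> (\<lambda>i. add i a) ` ssum J1 J2"
    then obtain x y where xy: "x \<in> J1" "y \<in> J2" "z = add (add x y) a" unfolding ssum_add by blast
    obtain y' where y': "y' \<in> J2" "add y a = add a y'" using id_cos1[OF J2 xy(2) a] by blast
    obtain x' where x': "x' \<in> J1" "add x a = add a x'" using id_cos1[OF J1 xy(1) a] by blast
    have "z = add x (add y a)" using xy s1 s2 a by (simp add: add_assoc)
    also have "\<dots> = add (add x a) y'" using y' xy s1 s2 a by (simp add: add_assoc)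
    also have "\<dots> = add a (add x' y')" using x' y' xy s1 s2 a by (simp add: add_assoc)
    finally have "z = add a (add x' y')" .
    then show "z \<in> (\<lambda>i. add a i) ` ssum J1 J2" unfolding ssum_add using x' y' by blast
  next
    fix z assume "z \<in> (\<lambda>i. add a i) ` ssum J1 J2"
    then obtain x y where xy: "x \<in> J1" "y \<in> J2" "z = add a (add x y)" unfolding ssum_add by blast
    obtain y' where y': "y' \<in> J2" "add a y = add y' a" using id_cos2[OF J2 xy(2) a] by blast
    obtain x' where x': "x' \<in> J1" "add a x = add x' a" using id_cos2[OF J1 xy(1) a] by blast
    have "z = add (add a x) y" using xy s1 s2 a by (simp add: add_assoc)
    also have "\<dots> = add x' (add a y)" using x' xy s1 s2 a by (simp add: add_assoc)
    also have "\<dots> = add (add x' y') a" using x' y' xy s1 s2 a by (simp add: add_assoc)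
    finally have "z = add (add x' y') a" .
    then show "z \<in> (\<lambda>i. add i a) ` ssum J1 J2" unfolding ssum_add using x' y' by blast
  qed
  show "la a ` ssum J1 J2 \<subseteq> ssum J1 J2"
  proof
    fix z assume "z \<in> la a ` ssum J1 J2"
    then obtain x y where xy: "x \<in> J1" "y \<in> J2" "z = la a (add x y)" unfolding ssum_add by blast
    then have "z = add (la a x) (la a y)" using la_add a s1 s2 by blast
    then show "z \<in> ssum J1 J2" unfolding ssum_add using xy id_la[OF J1] id_la[OF J2] a by blast
  qed
qed

lemma ssum_cz: assumes I: "ideal I" and c1: "cz I J1" and c2: "cz I J2" shows "cz I (ssum J1 J2)"
  unfolding cz_def
proof (intro ballI)
  note s1 = id_sub[OF J1] and s2 = id_sub[OF J2] and si = id_sub[OF I]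
  fix i z assume i: "i \<in> I" and "z \<in> ssum J1 J2"
  then obtain x y where xy: "x \<in> J1" "y \<in> J2" "z = mul x y" unfolding ssum_def by blast
  define y' where "y' = la x y"
  have y': "y' \<in> J2" "z = add x y'" using xy id_la[OF J2] s1 s2 mul_la unfolding y'_def by auto
  have cx: "add i x = add x i" "mul i x = mul x i" "add i x = mul i x" using c1 i xy unfolding cz_def by blast+
  have cy: "add i y' = add y' i" "add i y' = mul i y'" using c2 i y' unfolding cz_def by blast+
  have cy2: "mul i y = mul y i" using c2 i xy unfolding cz_def by blast
  show "add i z = add z i \<and> mul i z = mul z i \<and> add i z = mul i z"
  proof (intro conjI)
    have a: "i \<in> A" "x \<in> A" "y \<in> A" "y' \<in> A" using si s1 s2 i xy y' by auto
    have "add i z = add (add i x) y'" using a y' by (simp add: add_assoc)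
    also have "\<dots> = add x (add i y')" using a cx(1) by (simp add: add_assoc)
    also have "\<dots> = add z i" using a cy(1) y' by (simp add: add_assoc)
    finally show "add i z = add z i" .
    have "mul i z = mul (mul i x) y" using a xy by (simp add: mul_assoc)
    also have "\<dots> = mul x (mul i y)" using a cx(2) by (simp add: mul_assoc)
    also have "\<dots> = mul z i" using a cy2 xy by (simp add: mul_assoc)
    finally show "mul i z = mul z i" .
    have "la i z = add (la i x) (la i y')" using a y' la_add by simp
    also have "\<dots> = z" using la_fix[OF a(1,2) cx(3)] la_fix[OF a(1,4) cy(2)] y' by simp
    finally have "la i z = z" .
    moreover have "mul i z = add i (la i z)" using mul_la a y' by simp
    ultimately show "add i z = mul i z" by simp
  qed
qed
end

lemma centr_cz: assumes I: "ideal I" and J: "ideal J" and c: "centralizes A add mul e I J"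
  shows "cz I J"
proof -
  obtain \<phi> where ph: "\<forall>i\<in>I. \<forall>j\<in>J. \<forall>i'\<in>I. \<forall>j'\<in>J.
            \<phi> (add i i', add j j') = add (\<phi> (i, j)) (\<phi> (i', j')) \<and>
            \<phi> (mul i i', mul j j') = mul (\<phi> (i, j)) (\<phi> (i', j'))"
     "\<forall>i\<in>I. \<phi> (i, e) = i" "\<forall>j\<in>J. \<phi> (e, j) = j"
    using c unfolding centralizes_def by blast
  show ?thesis unfolding cz_def
  proof (intro ballI conjI)
    fix i j assume i: "i \<in> I" and j: "j \<in> J"
    have ia: "i \<in> A" and ja: "j \<in> A" using i j id_sub I J by auto
    have eI: "e \<in> I" and eJ: "e \<in> J" using id_e I J by auto
    have "\<phi> (i, j) = \<phi> (add i e, add e j)" using ia ja by simp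
    also have "\<dots> = add (\<phi> (i, e)) (\<phi> (e, j))" using ph(1)[rule_format, OF i eJ eI j] by blast
    also have "\<dots> = add i j" using ph(2,3) i j by simp
    finally have 1: "\<phi> (i, j) = add i j" .
    have "\<phi> (i, j) = \<phi> (add e i, add j e)" using ia ja by simp
    also have "\<dots> = add (\<phi> (e, j)) (\<phi> (i, e))" using ph(1)[rule_format, OF eI j i eJ] by blast
    also have "\<dots> = add j i" using ph(2,3) i j by simp
    finally have 2: "\<phi> (i, j) = add j i" .
    have "\<phi> (i, j) = \<phi> (mul i e, mul e j)" using ia ja by simp
    also have "\<dots> = mul (\<phi> (i, e)) (\<phi> (e, j))" using ph(1)[rule_format, OF i eJ eI j] by blast
    also have "\<dots> = mul i j" using ph(2,3) i j by simp
    finally have 3: "\<phi> (i, j) = mul i j" .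
    have "\<phi> (i, j) = \<phi> (mul e i, mul j e)" using ia ja by simp
    also have "\<dots> = mul (\<phi> (e, j)) (\<phi> (i, e))" using ph(1)[rule_format, OF eI j i eJ] by blast
    also have "\<dots> = mul j i" using ph(2,3) i j by simp
    finally have 4: "\<phi> (i, j) = mul j i" .
    show "add i j = add j i" using 1 2 by simp
    show "mul i j = mul j i" using 3 4 by simp
    show "add i j = mul i j" using 1 3 by simp
  qed
qed

lemma cz_centr: assumes I: "ideal I" and JA: "J \<subseteq> A" and eJ: "e \<in> J"
  and Jm: "\<And>x y. x \<in> J \<Longrightarrow> y \<in> J \<Longrightarrow> mul x y \<in> J" and c: "cz I J"
  shows "centralizes A add mul e I J"
  unfolding centralizes_def
proof (intro exI[of _ "\<lambda>(i,j). add i j"] conjI ballI)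
  note si = id_sub[OF I]
  have cc: "\<And>i j. i \<in> I \<Longrightarrow> j \<in> J \<Longrightarrow> add i j = add j i \<and> mul i j = mul j i \<and> add i j = mul i j"
    using c unfolding cz_def by blast
  fix x assume "x \<in> I \<times> J" then show "(case x of (i, j) \<Rightarrow> add i j) \<in> A" using si JA by auto
next
  note si = id_sub[OF I]
  have cc: "\<And>i j. i \<in> I \<Longrightarrow> j \<in> J \<Longrightarrow> add i j = add j i \<and> mul i j = mul j i \<and> add i j = mul i j"
    using c unfolding cz_def by blast
  fix i j i' j' assume h: "i \<in> I" "j \<in> J" "i' \<in> I" "j' \<in> J"
  have a: "i \<in> A" "j \<in> A" "i' \<in> A" "j' \<in> A" using h si JA by auto
  have "add (add i i') (add j j') = add i (add (add i' j) j')" using a by (simp add: add_assoc)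
  also have "\<dots> = add i (add (add j i') j')" using cc[OF h(3,2)] by simp
  also have "\<dots> = add (add i j) (add i' j')" using a by (simp add: add_assoc)
  finally show "(case (add i i', add j j') of (i, j) \<Rightarrow> add i j) =
    add (case (i, j) of (i, j) \<Rightarrow> add i j) (case (i', j') of (i, j) \<Rightarrow> add i j)" by simp
  have m1: "mul i i' \<in> I" "mul j j' \<in> J" using h id_nrm(4)[OF I] Jm by auto
  have "add (mul i i') (mul j j') = mul (mul i i') (mul j j')" using cc m1 by blast
  also have "\<dots> = mul i (mul (mul i' j) j')" using a by (simp add: mul_assoc)
  also have "\<dots> = mul i (mul (mul j i') j')" using cc[OF h(3,2)] by simp
  also have "\<dots> = mul (mul i j) (mul i' j')" using a by (simp add: mul_assoc)
  also have "\<dots> = mul (add i j) (add i' j')"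
  proof -
    have e1: "add i j = mul i j" using cc[OF h(1,2)] by blast
    have e2: "add i' j' = mul i' j'" using cc[OF h(3,4)] by blast
    show ?thesis by (simp only: e1 e2)
  qed
  finally show "(case (mul i i', mul j j') of (i, j) \<Rightarrow> add i j) =
    mul (case (i, j) of (i, j) \<Rightarrow> add i j) (case (i', j') of (i, j) \<Rightarrow> add i j)" by simp
next
  fix i assume "i \<in> I" then show "(case (i, e) of (i, j) \<Rightarrow> add i j) = i" using id_sub[OF I] by simp
next
  fix j assume "j \<in> J" then show "(case (e, j) of (i, j) \<Rightarrow> add i j) = j" using JA by auto
qed

lemma main: assumes I: "ideal I"
  shows "\<exists>C. ideal C \<and> centralizes A add mul e I C \<and>
              (\<forall>J. ideal J \<and> centralizes A add mul e I J \<longrightarrow> J \<subseteq> C)"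
proof -
  define C where "C = \<Union>{J. ideal J \<and> cz I J}"
  have memC: "x \<in> C \<longleftrightarrow> (\<exists>J. ideal J \<and> cz I J \<and> x \<in> J)" for x unfolding C_def by blast
  have memE: "x \<in> C \<Longrightarrow> \<exists>J. ideal J \<and> cz I J \<and> x \<in> J" for x unfolding C_def by blast
  have memI: "ideal J \<Longrightarrow> cz I J \<Longrightarrow> x \<in> J \<Longrightarrow> x \<in> C" for J x unfolding C_def by blast
  have czC: "cz I C" unfolding cz_def
  proof (intro ballI)
    fix i j assume "i \<in> I" "j \<in> C"
    then obtain J where "cz I J" "j \<in> J" using memE[of j] by blast
    then show "add i j = add j i \<and> mul i j = mul j i \<and> add i j = mul i j"
      using \<open>i \<in> I\<close> unfolding cz_def by blast
  qed
  have CA: "C \<subseteq> A"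
  proof
    fix x assume "x \<in> C"
    then obtain J where "ideal J" "x \<in> J" using memE[of x] by blast
    then show "x \<in> A" using id_sub by blast
  qed
  have "cz I {e}" using id_sub[OF I] by (simp add: cz_def)
  then have eC: "e \<in> C" using memI[OF triv_ideal] by blast
  have Cm: "mul x y \<in> C" if xC: "x \<in> C" and yC: "y \<in> C" for x y
  proof -
    obtain J1 where J1: "ideal J1" "cz I J1" "x \<in> J1" using memE[OF xC] by blast
    obtain J2 where J2: "ideal J2" "cz I J2" "y \<in> J2" using memE[OF yC] by blast
    have "mul x y \<in> ssum J1 J2" unfolding ssum_def using J1 J2 by blast
    moreover have "ideal (ssum J1 J2)" using ssum_ideal J1 J2 by blast
    moreover have "cz I (ssum J1 J2)" using ssum_cz[OF J1(1) J2(1) I J1(2) J2(2)] .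
    ultimately show ?thesis using memI[of "ssum J1 J2" "mul x y"] by blast
  qed
  have idC: "ideal C" unfolding sb_ideal_def normal_iff
  proof (intro conjI ballI)
    show "C \<subseteq> A" "C \<noteq> {}" using CA eC by auto
    show "mi x \<in> C" if "x \<in> C" for x
    proof -
      obtain J where J: "ideal J" "cz I J" "x \<in> J" using memE[OF \<open>x \<in> C\<close>] by blast
      then have "mi x \<in> J" using id_nrm(3) by blast
      then show ?thesis using memI[OF J(1,2)] by blast
    qed
    show "mul x y \<in> C" if "x \<in> C" "y \<in> C" for x y using that Cm by blast
    show "mul (mul a x) (mi a) \<in> C" if "a \<in> A" "x \<in> C" for a x
    proof -
      obtain J where J: "ideal J" "cz I J" "x \<in> J" using memE[OF \<open>x \<in> C\<close>] by blast
      then have "mul (mul a x) (mi a) \<in> J" using id_nrm(5) \<open>a \<in> A\<close> by blast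
      then show ?thesis using memI[OF J(1,2)] by blast
    qed
    show "la a ` C \<subseteq> C" if "a \<in> A" for a
    proof
      fix z assume "z \<in> la a ` C"
      then obtain x where x: "x \<in> C" "z = la a x" by blast
      obtain J where J: "ideal J" "cz I J" "x \<in> J" using memE[OF x(1)] by blast
      then have "z \<in> J" using id_la \<open>a \<in> A\<close> x by blast
      then show "z \<in> C" using memI[OF J(1,2)] by blast
    qed
    fix a assume a: "a \<in> A"
    show "(\<lambda>i. add i a) ` C = (\<lambda>i. add a i) ` C"
    proof (rule Set.set_eqI, rule iffI)
      fix z assume "z \<in> (\<lambda>i. add i a) ` C"
      then obtain x where x: "x \<in> C" "z = add x a" by blast
      obtain J where J: "ideal J" "cz I J" "x \<in> J" using memE[OF x(1)] by blast
      obtain x' where x': "x' \<in> J" "add x a = add a x'" using id_cos1[OF J(1) J(3) a] by blast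
      have "x' \<in> C" using memI[OF J(1,2) x'(1)] .
      then show "z \<in> (\<lambda>i. add a i) ` C" using x x' by blast
    next
      fix z assume "z \<in> (\<lambda>i. add a i) ` C"
      then obtain x where x: "x \<in> C" "z = add a x" by blast
      obtain J where J: "ideal J" "cz I J" "x \<in> J" using memE[OF x(1)] by blast
      obtain x' where x': "x' \<in> J" "add a x = add x' a" using id_cos2[OF J(1) J(3) a] by blast
      have "x' \<in> C" using memI[OF J(1,2) x'(1)] .
      then show "z \<in> (\<lambda>i. add i a) ` C" using x x' by blast
    qed
  qed
  show ?thesis
  proof (intro exI conjI allI impI)
    show "ideal C" by (rule idC)
    show "centralizes A add mul e I C" using cz_centr[OF I CA eC Cm czC] by blast
    fix J assume "ideal J \<and> centralizes A add mul e I J"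
    then have "cz I J" "ideal J" using centr_cz[OF I] by blast+
    then show "J \<subseteq> C" using memI by blast
  qed
qed

end

theorem mainTheorem13:
  assumes "skew_brace A add mul e"
    and "sb_ideal A add mul e I"
  shows "\<exists>C. sb_ideal A add mul e C \<and> centralizes A add mul e I C \<and>
              (\<forall>J. sb_ideal A add mul e J \<and> centralizes A add mul e I J \<longrightarrow> J \<subseteq> C)"
  using sb.main[OF sb.intro[OF assms(1)] assms(2)] .

end
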